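(* For a binary word $\mathrm x$ of length $m$ and $n\geq0$ let $\widetilde P_{\bar T^{-n}[\![\mathrm x]\!]}=P_{\bar T^{-n}[\![\mathrm x]\!]}\oplus P'_{[\![1]\!]}P_{\bar T^{-n}[\![\mathrm x]\!]}$, an operator on $\widetilde{\mathcal H}$. Then for all $n,m$ with $n+m<\Bbbk-1$, $$\widetilde U_\theta^*\,\widetilde P_{\bar T^{-n}[\![\mathrm x]\!]}\,\widetilde U_\theta=\widetilde P_{\bar T^{-n-1}[\![\mathrm x]\!]}.$$
   Context: Let $\Bbbk\geq3$ and $\mathcal H=(\mathbb C^2)^{\otimes\Bbbk}$ with orthonormal basis $|\mathrm y\rangle=|\mathrm y_1\rangle\otimes\cdots\otimes|\mathrm y_\Bbbk\rangle$, $\mathrm y_i\in\{0,1\}$. For a binary word $\mathrm w=\mathrm w_1\dots\mathrm w_m$ ($m\leq\Bbbk$), $P_{[\![\mathrm w]\!]}$ is the orthogonal projection onto the span of the $|\mathrm y\rangle$ with $\mathrm y_1\dots\mathrm y_m=\mathrm w$; $[\![\mathrm w]\!]\subset[0,1]$ is the dyadic cylinder of points whose first $m$ binary digits are $\mathrm w$. $\bar T(x)=2x\bmod1$, so $\bar T^{-n}[\![\mathrm w]\!]=\bigcup_{|\mathrm y|=n}[\![\mathrm y\mathrm w]\!]$, and $P_{\bar T^{-n}[\![\mathrm w]\!]}=\sum_{|\mathrm y|=n}P_{[\![\mathrm y\mathrm w]\!]}$. Let $\mathbf U$ be a $2\times2$ unitary with all entries of modulus $2^{-1/2}$, $\bar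 U|\mathrm y\rangle=|\mathrm y_2\rangle\otimes\cdots\otimes|\mathrm y_\Bbbk\rangle\otimes\mathbf U|\mathrm y_1\rangle$, $\sigma$ the unitary exchanging the last two tensor factors, and $P'_{[\![j]\!]}=\bar UP_{[\![j]\!]}\bar U^*$ for $j\in\{0,1\}$. Tower space $\widetilde{\mathcal H}=\mathcal H\oplus P'_{[\![1]\!]}\mathcal H$ with the direct-sum scalar product, and $\widetilde U_\theta(\phi_0,\phi_1)=\big(\sigma\bar UP'_{[\![1]\!]}\phi_1+\bar UP_{[\![0]\!]}\phi_0,\ e^{i\theta}\bar UP_{[\![1]\!]}\phi_0\big)$, $\theta\in\mathbb R$. *)

theory Defs
  imports Complex_Main
begin

(* Binary digits are bool (False = 0, True = 1); basis vectors |y> of H are indexed by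
   words y :: bool list of length k.  A vector of H is its coefficient function,
   required to vanish off words of length k. *)

definition Hsp :: "nat \<Rightarrow> (bool list \<Rightarrow> complex) set" where
  "Hsp k = {\<phi>. \<forall>y. length y \<noteq> k \<longrightarrow> \<phi> y = 0}"

definition ip :: "nat \<Rightarrow> (bool list \<Rightarrow> complex) \<Rightarrow> (bool list \<Rightarrow> complex) \<Rightarrow> complex" where
  "ip k \<phi> \<psi> = (\<Sum>y\<in>{y. length y = k}. cnj (\<phi> y) * \<psi> y)"

(* linear operator given on the basis: f y z = coefficient of |z> in the image of |y> *)
definition basis_op :: "nat \<Rightarrow> (bool list \<Rightarrow> bool list \<Rightarrow> complex)
    \<Rightarrow> (bool list \<Rightarrow> complex) \<Rightarrow> bool list \<Rightarrow> complex" where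
  "basis_op k f \<phi> = (\<lambda>z. \<Sum>y\<in>{y. length y = k}. \<phi> y * f y z)"

definition cyl_proj :: "bool list \<Rightarrow> (bool list \<Rightarrow> complex) \<Rightarrow> bool list \<Rightarrow> complex" where
  "cyl_proj w \<phi> = (\<lambda>z. if take (length w) z = w then \<phi> z else 0)"

(* P_{T^{-n}[[x]]} = sum over words y of length n of P_[[y x]] *)
definition preimg_proj :: "nat \<Rightarrow> bool list \<Rightarrow> (bool list \<Rightarrow> complex) \<Rightarrow> bool list \<Rightarrow> complex" where
  "preimg_proj n x \<phi> = (\<lambda>z. \<Sum>y\<in>{y::bool list. length y = n}. cyl_proj (y @ x) \<phi> z)"

(* U i j = <i| U |j>;  Ubar |y> = |y_2 ... y_k> (x) U |y_1> *)
definition Ubar :: "nat \<Rightarrow> (bool \<Rightarrow> bool \<Rightarrow> complex) \<Rightarrow> (bool list \<Rightarrow> complex) \<Rightarrow> bool list \<Rightarrow> complex" where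
  "Ubar k U = basis_op k (\<lambda>y z. if length z = k \<and> butlast z = tl y then U (last z) (hd y) else 0)"

definition swap_last2 :: "nat \<Rightarrow> (bool list \<Rightarrow> complex) \<Rightarrow> bool list \<Rightarrow> complex" where
  "swap_last2 k = basis_op k (\<lambda>y z. if z = take (k - 2) y @ [y ! (k - 1), y ! (k - 2)] then 1 else 0)"

definition adjH :: "nat \<Rightarrow> ((bool list \<Rightarrow> complex) \<Rightarrow> bool list \<Rightarrow> complex)
    \<Rightarrow> (bool list \<Rightarrow> complex) \<Rightarrow> bool list \<Rightarrow> complex" where
  "adjH k A = (\<lambda>\<psi>. THE \<chi>. \<chi> \<in> Hsp k \<and> (\<forall>\<phi>\<in>Hsp k. ip k (A \<phi>) \<psi> = ip k \<phi> \<chi>))"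

definition Pprime :: "nat \<Rightarrow> (bool \<Rightarrow> bool \<Rightarrow> complex) \<Rightarrow> bool
    \<Rightarrow> (bool list \<Rightarrow> complex) \<Rightarrow> bool list \<Rightarrow> complex" where
  "Pprime k U b = (\<lambda>\<phi>. Ubar k U (cyl_proj [b] (adjH k (Ubar k U) \<phi>)))"

type_synonym tvec = "(bool list \<Rightarrow> complex) \<times> (bool list \<Rightarrow> complex)"

definition Htil :: "nat \<Rightarrow> (bool \<Rightarrow> bool \<Rightarrow> complex) \<Rightarrow> tvec set" where
  "Htil k U = {(\<phi>0, \<phi>1). \<phi>0 \<in> Hsp k \<and> \<phi>1 \<in> Pprime k U True ` Hsp k}"

definition ipT :: "nat \<Rightarrow> tvec \<Rightarrow> tvec \<Rightarrow> complex" where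
  "ipT k v w = ip k (fst v) (fst w) + ip k (snd v) (snd w)"

definition adjT :: "nat \<Rightarrow> (bool \<Rightarrow> bool \<Rightarrow> complex) \<Rightarrow> (tvec \<Rightarrow> tvec) \<Rightarrow> tvec \<Rightarrow> tvec" where
  "adjT k U A = (\<lambda>\<psi>. THE \<chi>. \<chi> \<in> Htil k U \<and> (\<forall>\<phi>\<in>Htil k U. ipT k (A \<phi>) \<psi> = ipT k \<phi> \<chi>))"

definition Util :: "nat \<Rightarrow> (bool \<Rightarrow> bool \<Rightarrow> complex) \<Rightarrow> real \<Rightarrow> tvec \<Rightarrow> tvec" where
  "Util k U \<theta> = (\<lambda>(\<phi>0, \<phi>1).
     (\<lambda>z. swap_last2 k (Ubar k U (Pprime k U True \<phi>1)) z + Ubar k U (cyl_proj [False] \<phi>0) z,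
      \<lambda>z. exp (\<i> * complex_of_real \<theta>) * Ubar k U (cyl_proj [True] \<phi>0) z))"

definition Ptil :: "nat \<Rightarrow> (bool \<Rightarrow> bool \<Rightarrow> complex) \<Rightarrow> nat \<Rightarrow> bool list \<Rightarrow> tvec \<Rightarrow> tvec" where
  "Ptil k U n x = (\<lambda>(\<phi>0, \<phi>1). (preimg_proj n x \<phi>0, Pprime k U True (preimg_proj n x \<phi>1)))"

end

theory Submission
  imports Defs
begin


definition Ustar :: "nat \<Rightarrow> (bool \<Rightarrow> bool \<Rightarrow> complex) \<Rightarrow> (bool list \<Rightarrow> complex) \<Rightarrow> bool list \<Rightarrow> complex" where
  "Ustar k U \<psi> = (\<lambda>y. if length y = k then cnj (U False (hd y)) * \<psi> (tl y @ [False]) + cnj (U True (hd y)) * \<psi> (tl y @ [True]) else 0)"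

lemma finite_len: "finite {y::bool list. length y = m}"
  using finite_lists_length_eq[of "UNIV::bool set" m] by simp

lemma sum_len_cons:
  "(\<Sum>y\<in>{y::bool list. length y = Suc m}. f y) = (\<Sum>w\<in>{w::bool list. length w = m}. f (False # w) + f (True # w))"
proof -
  let ?W = "{w::bool list. length w = m}"
  have eq: "{y::bool list. length y = Suc m} = (Cons False) ` ?W \<union> (Cons True) ` ?W"
  proof
    show "{y::bool list. length y = Suc m} \<subseteq> (Cons False) ` ?W \<union> (Cons True) ` ?W"
    proof
      fix y :: "bool list" assume "y \<in> {y. length y = Suc m}"
      then obtain b w where "y = b # w" "length w = m" by (auto simp: length_Suc_conv)
      then show "y \<in> (Cons False) ` ?W \<union> (Cons True) ` ?W" by (cases b) auto
    qed
  qed auto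
  have "(\<Sum>y\<in>{y::bool list. length y = Suc m}. f y) = sum f (Cons False ` ?W) + sum f (Cons True ` ?W)"
    unfolding eq by (rule sum.union_disjoint) (auto simp: finite_len)
  also have "\<dots> = (\<Sum>w\<in>?W. f (False # w)) + (\<Sum>w\<in>?W. f (True # w))"
    by (simp add: sum.reindex)
  finally show ?thesis by (simp add: sum.distrib)
qed

lemma sum_len_snoc:
  "(\<Sum>y\<in>{y::bool list. length y = Suc m}. f y) = (\<Sum>w\<in>{w::bool list. length w = m}. f (w @ [False]) + f (w @ [True]))"
proof -
  let ?W = "{w::bool list. length w = m}"
  have eq: "{y::bool list. length y = Suc m} = (\<lambda>w. w @ [False]) ` ?W \<union> (\<lambda>w. w @ [True]) ` ?W"
  proof
    show "{y::bool list. length y = Suc m} \<subseteq> (\<lambda>w. w @ [False]) ` ?W \<union> (\<lambda>w. w @ [True]) ` ?W"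
    proof
      fix y :: "bool list" assume y: "y \<in> {y. length y = Suc m}"
      then have "y \<noteq> []" by auto
      then obtain b w where yw: "y = w @ [b]" using rev_exhaust[of y] by blast
      with y have "length w = m" by simp
      with yw show "y \<in> (\<lambda>w. w @ [False]) ` ?W \<union> (\<lambda>w. w @ [True]) ` ?W" by (cases b) auto
    qed
  qed auto
  have inj: "inj_on (\<lambda>w. w @ [b]) A" for b A by (auto simp: inj_on_def)
  have "(\<Sum>y\<in>{y::bool list. length y = Suc m}. f y) = sum f ((\<lambda>w. w @ [False]) ` ?W) + sum f ((\<lambda>w. w @ [True]) ` ?W)"
    unfolding eq by (rule sum.union_disjoint) (auto simp: finite_len)
  also have "\<dots> = (\<Sum>w\<in>?W. f (w @ [False])) + (\<Sum>w\<in>?W. f (w @ [True]))"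
    by (simp add: sum.reindex[OF inj])
  finally show ?thesis by (simp add: sum.distrib)
qed

lemma ubar_eval:
  assumes "length z = Suc m"
  shows "Ubar (Suc m) U \<phi> z = \<phi> (False # butlast z) * U (last z) False + \<phi> (True # butlast z) * U (last z) True"
proof -
  have "Ubar (Suc m) U \<phi> z = (\<Sum>w\<in>{w::bool list. length w = m}.
          (if w = butlast z then \<phi> (False # w) * U (last z) False + \<phi> (True # w) * U (last z) True else 0))"
    unfolding Ubar_def basis_op_def using assms
    by (simp add: sum_len_cons) (rule sum.cong, auto)
  also have "\<dots> = \<phi> (False # butlast z) * U (last z) False + \<phi> (True # butlast z) * U (last z) True"
    using assms by (simp add: sum.delta' finite_len)
  finally show ?thesis .
qed

lemma ubar_out: "length z \<noteq> k \<Longrightarrow> Ubar k U \<phi> z = 0"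
  unfolding Ubar_def basis_op_def by simp


lemma len2_decomp:
  assumes "length y = Suc (Suc j)"
  obtains v c d where "y = v @ [c, d]" "length v = j"
proof -
  have "y \<noteq> []" using assms by auto
  then obtain y' d where yd: "y = y' @ [d]" using rev_exhaust[of y] by blast
  then have "y' \<noteq> []" using assms by auto
  then obtain v c where "y' = v @ [c]" using rev_exhaust[of y'] by blast
  with yd assms show ?thesis using that by auto
qed

lemma len1_decomp:
  assumes "length y = Suc j"
  obtains v d where "y = v @ [d]" "length v = j"
proof -
  have "y \<noteq> []" using assms by auto
  then obtain y' d where yd: "y = y' @ [d]" using rev_exhaust[of y] by blast
  with assms show ?thesis using that by auto
qed

lemma swap_eval:
  assumes "length u = j"
  shows "swap_last2 (Suc (Suc j)) \<psi> (u @ [a, b]) = \<psi> (u @ [b, a])"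
proof -
  have key: "(u @ [a, b] = take j y @ [y ! Suc j, y ! j]) \<longleftrightarrow> y = u @ [b, a]"
    if ly: "length y = Suc (Suc j)" for y
  proof -
    obtain v c d where "y = v @ [c, d]" "length v = j" using len2_decomp[OF ly] by blast
    then show ?thesis using assms by (auto simp: nth_append)
  qed
  have "swap_last2 (Suc (Suc j)) \<psi> (u @ [a, b]) = (\<Sum>y\<in>{y::bool list. length y = Suc (Suc j)}. if y = u @ [b, a] then \<psi> y else 0)"
    unfolding swap_last2_def basis_op_def
  proof (rule sum.cong)
    fix y assume "y \<in> {y::bool list. length y = Suc (Suc j)}"
    then have ly: "length y = Suc (Suc j)" by simp
    have e: "Suc (Suc j) - 2 = j" "Suc (Suc j) - 1 = Suc j" by auto
    show "\<psi> y * (if u @ [a, b] = take (Suc (Suc j) - 2) y @ [y ! (Suc (Suc j) - 1), y ! (Suc (Suc j) - 2)] then 1 else 0) =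
         (if y = u @ [b, a] then \<psi> y else 0)"
      unfolding e key[OF ly] by simp
  qed simp
  also have "\<dots> = \<psi> (u @ [b, a])" using assms by (simp add: sum.delta' finite_len)
  finally show ?thesis .
qed

lemma swap_out:
  assumes "length z \<noteq> Suc (Suc j)"
  shows "swap_last2 (Suc (Suc j)) \<psi> z = 0"
  unfolding swap_last2_def basis_op_def
proof (rule sum.neutral, intro ballI)
  fix y assume "y \<in> {y::bool list. length y = Suc (Suc j)}"
  then have "length (take (Suc (Suc j) - 2) y @ [y ! (Suc (Suc j) - 1), y ! (Suc (Suc j) - 2)]) = Suc (Suc j)" by simp
  then show "\<psi> y * (if z = take (Suc (Suc j) - 2) y @ [y ! (Suc (Suc j) - 1), y ! (Suc (Suc j) - 2)] then 1 else 0) = 0"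
    using assms by auto
qed

lemma Q_eval:
  "preimg_proj n x \<phi> z = (if n + length x \<le> length z \<and> take (length x) (drop n z) = x then \<phi> z else 0)"
proof -
  have key: "(take (n + length x) z = y @ x) \<longleftrightarrow> (y = take n z \<and> n + length x \<le> length z \<and> take (length x) (drop n z) = x)"
    if "length y = n" for y
  proof -
    have "take (n + length x) z = take n z @ take (length x) (drop n z)"
      using that by (simp add: take_add)
    then show ?thesis using that
      by (smt (verit) add_diff_cancel_left' append_eq_append_conv diff_is_0_eq le_add1 length_append length_drop length_take min.absorb_iff2 nat_le_linear take_all_iff)
  qed
  have "preimg_proj n x \<phi> z = (\<Sum>y\<in>{y::bool list. length y = n}. if y = take n z then (if n + length x \<le> length z \<and> take (length x) (drop n z) = x then \<phi> z else 0) else 0)"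
    unfolding preimg_proj_def cyl_proj_def
  proof (rule sum.cong)
    fix y assume "y \<in> {y::bool list. length y = n}"
    then have ly: "length y = n" by simp
    show "(if take (length (y @ x)) z = y @ x then \<phi> z else 0) = (if y = take n z then (if n + length x \<le> length z \<and> take (length x) (drop n z) = x then \<phi> z else 0) else 0)"
      using key[OF ly] ly by auto
  qed simp
  also have "\<dots> = (if n + length x \<le> length z \<and> take (length x) (drop n z) = x then \<phi> z else 0)"
    by (simp add: sum.delta' finite_len)
  finally show ?thesis .
qed


lemma ip_add_left: "ip k (\<lambda>z. a z + b z) c = ip k a c + ip k b c"
  unfolding ip_def by (simp add: sum.distrib distrib_right)
lemma ip_add_right: "ip k c (\<lambda>z. a z + b z) = ip k c a + ip k c b"
  unfolding ip_def by (simp add: sum.distrib distrib_left)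
lemma ip_scale_left: "ip k (\<lambda>z. s * a z) c = cnj s * ip k a c"
  unfolding ip_def by (simp add: sum_distrib_left mult.assoc)
lemma ip_scale_right: "ip k c (\<lambda>z. s * a z) = s * ip k c a"
  unfolding ip_def by (simp add: sum_distrib_left algebra_simps)
lemma ip_cnj: "ip k a b = cnj (ip k b a)"
  unfolding ip_def by (simp add: mult.commute)
lemma ip_zero_left: "ip k (\<lambda>_. 0) c = 0"
  unfolding ip_def by simp
lemma ip_e:
  assumes "length z = k"
  shows "ip k (\<lambda>w. if w = z then 1 else 0) c = c z"
proof -
  have "ip k (\<lambda>w. if w = z then 1 else 0) c = (\<Sum>w\<in>{w::bool list. length w = k}. if w = z then c w else 0)"
    unfolding ip_def by (rule sum.cong) auto
  also have "\<dots> = c z" using assms by (simp add: sum.delta' finite_len)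
  finally show ?thesis .
qed

lemma ip_cyl: "ip k (cyl_proj w a) b = ip k a (cyl_proj w b)"
  unfolding ip_def cyl_proj_def by (rule sum.cong) auto

lemma ip_ubar:
  assumes "0 < k"
  shows "ip k (Ubar k U a) b = ip k a (Ustar k U b)"
proof -
  obtain m where k: "k = Suc m" using assms by (cases k) auto
  have "ip k (Ubar k U a) b = (\<Sum>w\<in>{w::bool list. length w = m}. cnj (Ubar k U a (w @ [False])) * b (w @ [False]) + cnj (Ubar k U a (w @ [True])) * b (w @ [True]))"
    unfolding k ip_def sum_len_snoc[where m=m] ..
  also have "\<dots> = (\<Sum>w\<in>{w::bool list. length w = m}. cnj (a (False # w)) * Ustar k U b (False # w) + cnj (a (True # w)) * Ustar k U b (True # w))"
    by (rule sum.cong) (simp_all add: k ubar_eval Ustar_def algebra_simps)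
  also have "\<dots> = ip k a (Ustar k U b)"
    unfolding k ip_def sum_len_cons[where m=m] ..
  finally show ?thesis .
qed

lemma ip_ustar:
  assumes "0 < k"
  shows "ip k (Ustar k U a) b = ip k a (Ubar k U b)"
  by (metis assms ip_cnj ip_ubar)

lemma ip_swap: "ip (Suc (Suc j)) (swap_last2 (Suc (Suc j)) a) b = ip (Suc (Suc j)) a (swap_last2 (Suc (Suc j)) b)"
  unfolding ip_def sum_len_snoc[where m="Suc j"] sum_len_snoc[where m=j]
  by (rule sum.cong) (simp_all add: swap_eval algebra_simps)

lemma Hsp_ubar: "Ubar k U a \<in> Hsp k"
  unfolding Hsp_def by (simp add: ubar_out)
lemma Hsp_ustar: "Ustar k U a \<in> Hsp k"
  unfolding Hsp_def Ustar_def by simp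
lemma Hsp_cyl: "a \<in> Hsp k \<Longrightarrow> cyl_proj w a \<in> Hsp k"
  unfolding Hsp_def cyl_proj_def by simp
lemma Hsp_Q: "a \<in> Hsp k \<Longrightarrow> preimg_proj n x a \<in> Hsp k"
  unfolding Hsp_def Q_eval by simp
lemma Hsp_swap: "swap_last2 (Suc (Suc j)) a \<in> Hsp (Suc (Suc j))"
  unfolding Hsp_def by (simp add: swap_out)

lemma adjH_ubar:
  assumes "0 < k"
  shows "adjH k (Ubar k U) \<psi> = Ustar k U \<psi>"
  unfolding adjH_def
proof (rule the_equality)
  show "Ustar k U \<psi> \<in> Hsp k \<and> (\<forall>\<phi>\<in>Hsp k. ip k (Ubar k U \<phi>) \<psi> = ip k \<phi> (Ustar k U \<psi>))"
    using ip_ubar[OF assms] Hsp_ustar by blast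
  fix \<chi> assume h: "\<chi> \<in> Hsp k \<and> (\<forall>\<phi>\<in>Hsp k. ip k (Ubar k U \<phi>) \<psi> = ip k \<phi> \<chi>)"
  show "\<chi> = Ustar k U \<psi>"
  proof
    fix z
    show "\<chi> z = Ustar k U \<psi> z"
    proof (cases "length z = k")
      case True
      let ?e = "\<lambda>w. if w = z then 1 else 0"
      have "?e \<in> Hsp k" using True unfolding Hsp_def by auto
      then have "ip k ?e \<chi> = ip k ?e (Ustar k U \<psi>)" using h ip_ubar[OF assms] by metis
      then show ?thesis using ip_e[OF True] by simp
    next
      case False
      then show ?thesis using h Hsp_ustar unfolding Hsp_def by auto
    qed
  qed
qed

lemma Pprime_eq:
  assumes "0 < k"
  shows "Pprime k U b \<phi> = Ubar k U (cyl_proj [b] (Ustar k U \<phi>))"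
  unfolding Pprime_def adjH_ubar[OF assms] ..




definition Ustil :: "nat \<Rightarrow> (bool \<Rightarrow> bool \<Rightarrow> complex) \<Rightarrow> real \<Rightarrow> tvec \<Rightarrow> tvec" where
  "Ustil k U \<theta> = (\<lambda>(\<xi>1, \<xi>2). (\<lambda>z. cyl_proj [False] (Ustar k U \<xi>1) z + cnj (exp (\<i> * complex_of_real \<theta>)) * cyl_proj [True] (Ustar k U \<xi>2) z,
      Pprime k U True (Ustar k U (swap_last2 k \<xi>1))))"

lemma exp_unit: "cnj (exp (\<i> * complex_of_real \<theta>)) * exp (\<i> * complex_of_real \<theta>) = 1"
proof -
  have "norm (exp (\<i> * complex_of_real \<theta>)) = 1" by simp
  then show ?thesis using complex_norm_square[of "exp (\<i> * complex_of_real \<theta>)"] by (simp add: mult.commute)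
qed

context
  fixes k j :: nat and U :: "bool \<Rightarrow> bool \<Rightarrow> complex"
  assumes kj: "k = Suc (Suc (Suc j))"
    and unit: "\<forall>i l. (\<Sum>j\<in>UNIV. cnj (U j i) * U j l) = (if i = l then 1 else 0)"
begin

lemma unitF: "cnj (U False i) * U False l + cnj (U True i) * U True l = (if i = l then 1 else 0)"
  using unit by (simp add: UNIV_bool add.commute)

lemma U1:
  assumes "d \<in> Hsp k"
  shows "Ustar k U (Ubar k U d) = d"
proof
  fix y
  show "Ustar k U (Ubar k U d) y = d y"
  proof (cases "length y = k")
    case True
    then obtain h v where y: "y = h # v" "length v = Suc (Suc j)" using kj by (cases y) auto
    have "Ustar k U (Ubar k U d) y = d (False # v) * (cnj (U False h) * U False False + cnj (U True h) * U True False)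
         + d (True # v) * (cnj (U False h) * U False True + cnj (U True h) * U True True)"
      using y by (simp add: Ustar_def kj ubar_eval algebra_simps)
    also have "\<dots> = d y" using y by (cases h) (simp_all add: unitF)
    finally show ?thesis .
  next
    case False
    then show ?thesis using assms unfolding Hsp_def Ustar_def by simp
  qed
qed


lemma k0: "0 < k" using kj by simp

lemma ubar_k: "length z = k \<Longrightarrow> Ubar k U \<phi> z = \<phi> (False # butlast z) * U (last z) False + \<phi> (True # butlast z) * U (last z) True"
  using ubar_eval[of z "Suc (Suc j)" U \<phi>] kj by simp

lemma ubar_add: "Ubar k U (\<lambda>z. a z + b z) = (\<lambda>z. Ubar k U a z + Ubar k U b z)"
  unfolding Ubar_def basis_op_def by (simp add: sum.distrib distrib_right)
lemma ubar_scale: "Ubar k U (\<lambda>z. s * a z) = (\<lambda>z. s * Ubar k U a z)"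
  unfolding Ubar_def basis_op_def by (simp add: sum_distrib_left mult.assoc)
lemma ubar_zero: "Ubar k U (\<lambda>z. 0) = (\<lambda>z. 0)"
  unfolding Ubar_def basis_op_def by simp
lemma ustar_add: "Ustar k U (\<lambda>z. a z + b z) = (\<lambda>z. Ustar k U a z + Ustar k U b z)"
  unfolding Ustar_def by (simp add: algebra_simps fun_eq_iff)
lemma ustar_scale: "Ustar k U (\<lambda>z. s * a z) = (\<lambda>z. s * Ustar k U a z)"
  unfolding Ustar_def by (simp add: algebra_simps fun_eq_iff)
lemma ustar_zero: "Ustar k U (\<lambda>z. 0) = (\<lambda>z. 0)"
  unfolding Ustar_def fun_eq_iff by auto
lemma cyl_add: "cyl_proj w (\<lambda>z. a z + b z) = (\<lambda>z. cyl_proj w a z + cyl_proj w b z)"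
  unfolding cyl_proj_def by auto
lemma cyl_scale: "cyl_proj w (\<lambda>z. s * a z) = (\<lambda>z. s * cyl_proj w a z)"
  unfolding cyl_proj_def by auto
lemma cyl_zero: "cyl_proj w (\<lambda>z. 0) = (\<lambda>z. 0)"
  unfolding cyl_proj_def by auto
lemma Q_add: "preimg_proj n x (\<lambda>z. a z + b z) = (\<lambda>z. preimg_proj n x a z + preimg_proj n x b z)"
  unfolding Q_eval by auto
lemma Q_scale: "preimg_proj n x (\<lambda>z. s * a z) = (\<lambda>z. s * preimg_proj n x a z)"
  unfolding Q_eval by auto
lemma swap_add: "swap_last2 k (\<lambda>z. a z + b z) = (\<lambda>z. swap_last2 k a z + swap_last2 k b z)"
  unfolding swap_last2_def basis_op_def by (simp add: sum.distrib distrib_right)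
lemma P_add: "Pprime k U b (\<lambda>z. a z + c z) = (\<lambda>z. Pprime k U b a z + Pprime k U b c z)"
  unfolding Pprime_eq[OF k0] by (simp add: ustar_add cyl_add ubar_add)
lemma P_scale: "Pprime k U b (\<lambda>z. s * a z) = (\<lambda>z. s * Pprime k U b a z)"
  unfolding Pprime_eq[OF k0] by (simp add: ustar_scale cyl_scale ubar_scale)
lemma P_zero: "Pprime k U b (\<lambda>z. 0) = (\<lambda>z. 0)"
  unfolding Pprime_eq[OF k0] by (simp add: ustar_zero cyl_zero ubar_zero)

lemma Hsp_P: "Pprime k U b a \<in> Hsp k"
  unfolding Pprime_eq[OF k0] by (rule Hsp_ubar)

lemma swap_k: "length u = Suc j \<Longrightarrow> swap_last2 k \<psi> (u @ [a, b]) = \<psi> (u @ [b, a])"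
  using swap_eval[of u "Suc j" \<psi> a b] kj by simp
lemma swap_outk: "length z \<noteq> k \<Longrightarrow> swap_last2 k \<psi> z = 0"
  using swap_out[of z "Suc j" \<psi>] kj by simp

lemma swap_swap:
  assumes "a \<in> Hsp k"
  shows "swap_last2 k (swap_last2 k a) = a"
proof
  fix z show "swap_last2 k (swap_last2 k a) z = a z"
  proof (cases "length z = k")
    case True
    then obtain v c d where "z = v @ [c, d]" "length v = Suc j" using kj len2_decomp[of z "Suc j"] by auto
    then show ?thesis by (simp add: swap_k)
  next
    case False then show ?thesis using assms by (simp add: swap_outk Hsp_def)
  qed
qed

lemma P_idem: "Pprime k U True (Pprime k U True \<eta>) = Pprime k U True \<eta>"
proof -
  have "Ustar k U (Ubar k U (cyl_proj [True] (Ustar k U \<eta>))) = cyl_proj [True] (Ustar k U \<eta>)"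
    by (rule U1) (intro Hsp_cyl Hsp_ustar)
  moreover have "cyl_proj [True] (cyl_proj [True] f) = cyl_proj [True] f" for f :: "bool list \<Rightarrow> complex"
    by (auto simp: cyl_proj_def)
  ultimately show ?thesis unfolding Pprime_eq[OF k0] by simp
qed

lemma P_B: "d \<in> Hsp k \<Longrightarrow> Pprime k U True (Ubar k U d) = Ubar k U (cyl_proj [True] d)"
  unfolding Pprime_eq[OF k0] by (simp add: U1)

lemma ip_P: "ip k (Pprime k U b a) c = ip k a (Pprime k U b c)"
  unfolding Pprime_eq[OF k0] by (simp add: ip_ubar[OF k0] ip_ustar[OF k0] ip_cyl)

lemma ip_S: "ip k (swap_last2 k a) c = ip k a (swap_last2 k c)"
  using ip_swap[of "Suc j" a c] kj by simp

lemma tdl: "n + m \<le> length v \<Longrightarrow> take m (drop n (v @ w)) = take m (drop n v)"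
  by simp

lemma C1: "preimg_proj n x (swap_last2 k a) = swap_last2 k (preimg_proj n x a)" if "n + length x \<le> Suc j"
proof
  fix z show "preimg_proj n x (swap_last2 k a) z = swap_last2 k (preimg_proj n x a) z"
  proof (cases "length z = k")
    case True
    then obtain v c d where "z = v @ [c, d]" "length v = Suc j" using kj len2_decomp[of z "Suc j"] by auto
    then show ?thesis using that kj by (simp add: swap_k Q_eval kj[symmetric])
  next
    case False then show ?thesis by (simp add: swap_outk Q_eval)
  qed
qed

lemma C2: "preimg_proj n x (Ubar k U a) = Ubar k U (preimg_proj (Suc n) x a)" if "n + length x \<le> Suc (Suc j)"
proof
  fix z show "preimg_proj n x (Ubar k U a) z = Ubar k U (preimg_proj (Suc n) x a) z"
  proof (cases "length z = k")
    case True
    then obtain v d where "z = v @ [d]" "length v = Suc (Suc j)" using kj len1_decomp[of z "Suc (Suc j)"] by auto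
    then show ?thesis using that by (simp add: ubar_k Q_eval kj[symmetric]) (simp add: kj)
  next
    case False then show ?thesis by (simp add: ubar_out Q_eval)
  qed
qed

lemma C3: "preimg_proj (Suc n) x (Pprime k U True c) = Pprime k U True (preimg_proj (Suc n) x c)" if "n + length x \<le> Suc j"
proof
  fix z show "preimg_proj (Suc n) x (Pprime k U True c) z = Pprime k U True (preimg_proj (Suc n) x c) z"
  proof (cases "length z = k")
    case True
    then obtain v d where "z = v @ [d]" "length v = Suc (Suc j)" using kj len1_decomp[of z "Suc (Suc j)"] by auto
    then show ?thesis using that kj by (simp add: Pprime_eq[OF k0] ubar_k Q_eval Ustar_def cyl_proj_def kj[symmetric])
  next
    case False then show ?thesis by (simp add: Pprime_eq[OF k0] ubar_out Q_eval)
  qed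
qed

lemma C4: "preimg_proj (Suc n) x (cyl_proj [b] a) = cyl_proj [b] (preimg_proj (Suc n) x a)"
  by (auto simp: Q_eval cyl_proj_def fun_eq_iff)


lemma fac: "(ca::complex) * (p * a1 * x + q * a1 * y) + cb * (p * b1 * x + q * b1 * y) = (ca*a1 + cb*b1) * (p*x + q*y)"
  by (simp add: algebra_simps)

lemma fac2: "(ca::complex) * (p * (x * a1) + q * (y * a1)) + cb * (p * (x * b1) + q * (y * b1)) = (ca*a1 + cb*b1) * (p*x + q*y)"
  by (simp add: algebra_simps)

lemma Z1: "cyl_proj [False] (Ustar k U (swap_last2 k (Ubar k U (Ubar k U (cyl_proj [True] d))))) = (\<lambda>_. 0)"
proof
  fix y show "cyl_proj [False] (Ustar k U (swap_last2 k (Ubar k U (Ubar k U (cyl_proj [True] d))))) y = 0"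
  proof (cases "length y = k")
    case True
    then obtain h r where y: "y = h # r" "length r = Suc (Suc j)" using kj by (cases y) auto
    then obtain u e where r: "r = u @ [e]" "length u = Suc j" using len1_decomp[of r "Suc j"] by auto
    show ?thesis
    proof (cases h)
      case True then show ?thesis using y by (simp add: cyl_proj_def)
    next
      case False
      have o: "cnj (U False False) * U False True + cnj (U True False) * U True True = 0" using unitF by simp
      show ?thesis using y r False
        apply (simp add: cyl_proj_def Ustar_def swap_k ubar_k kj[symmetric] butlast_append)
        apply (subst fac) using o by simp
    qed
  next
    case False then show ?thesis by (simp add: cyl_proj_def Ustar_def)
  qed
qed


lemma Z2: "cyl_proj [True] (Ustar k U (Ustar k U (swap_last2 k (Ubar k U (cyl_proj [False] c))))) = (\<lambda>_. 0)"
proof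
  fix y show "cyl_proj [True] (Ustar k U (Ustar k U (swap_last2 k (Ubar k U (cyl_proj [False] c))))) y = 0"
  proof (cases "length y = k")
    case True
    then obtain h g u where y: "y = h # g # u" "length u = Suc j" using kj
      by (cases y; cases "tl y") auto
    show ?thesis
    proof (cases h)
      case False then show ?thesis using y by (simp add: cyl_proj_def)
    next
      case True
      have o: "cnj (U False True) * U False False + cnj (U True True) * U True False = 0" using unitF by simp
      show ?thesis using y True
        apply (simp add: cyl_proj_def Ustar_def swap_k ubar_k kj[symmetric] butlast_append)
        apply (subst fac2) using o by simp
    qed
  next
    case False then show ?thesis by (simp add: cyl_proj_def Ustar_def)
  qed
qed


lemma Z1': "cyl_proj [False] (Ustar k U (swap_last2 k (Ubar k U (Pprime k U True c)))) = (\<lambda>_. 0)"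
  unfolding Pprime_eq[OF k0] by (rule Z1)

lemma Z2': "Pprime k U True (Ustar k U (swap_last2 k (Ubar k U (cyl_proj [False] c)))) = (\<lambda>_. 0)"
  unfolding Pprime_eq[OF k0] Z2 by (rule ubar_zero)

lemma Hsp_zero: "(\<lambda>_. 0) \<in> Hsp k" unfolding Hsp_def by simp

lemma htil_unique:
  assumes "\<chi> \<in> Htil k U" "\<chi>' \<in> Htil k U" "\<forall>\<phi>\<in>Htil k U. ipT k \<phi> \<chi> = ipT k \<phi> \<chi>'"
  shows "\<chi> = \<chi>'"
proof -
  obtain a1 \<eta> where c1: "\<chi> = (a1, Pprime k U True \<eta>)" "a1 \<in> Hsp k" using assms(1) unfolding Htil_def by auto
  obtain b1 \<eta>' where c2: "\<chi>' = (b1, Pprime k U True \<eta>')" "b1 \<in> Hsp k" using assms(2) unfolding Htil_def by auto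
  have z0: "(\<lambda>_. 0) \<in> Pprime k U True ` Hsp k" using P_zero Hsp_zero by (metis image_eqI)
  have "a1 = b1"
  proof
    fix z show "a1 z = b1 z"
    proof (cases "length z = k")
      case True
      let ?e = "\<lambda>w. if w = z then (1::complex) else 0"
      have "?e \<in> Hsp k" using True unfolding Hsp_def by auto
      then have "(?e, \<lambda>_. 0) \<in> Htil k U" using z0 unfolding Htil_def by auto
      then have "ipT k (?e, \<lambda>_. 0) \<chi> = ipT k (?e, \<lambda>_. 0) \<chi>'" using assms(3) by blast
      then show ?thesis using c1 c2 by (simp add: ipT_def ip_zero_left ip_e[OF True])
    next
      case False then show ?thesis using c1 c2 unfolding Hsp_def by auto
    qed
  qed
  moreover have "Pprime k U True \<eta> = Pprime k U True \<eta>'"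
  proof
    fix z show "Pprime k U True \<eta> z = Pprime k U True \<eta>' z"
    proof (cases "length z = k")
      case True
      let ?e = "\<lambda>w. if w = z then (1::complex) else 0"
      have "?e \<in> Hsp k" using True unfolding Hsp_def by auto
      then have "(\<lambda>_. 0, Pprime k U True ?e) \<in> Htil k U" using Hsp_zero unfolding Htil_def by auto
      then have "ipT k (\<lambda>_. 0, Pprime k U True ?e) \<chi> = ipT k (\<lambda>_. 0, Pprime k U True ?e) \<chi>'" using assms(3) by blast
      then show ?thesis using c1 c2 by (simp add: ipT_def ip_zero_left ip_P P_idem ip_e[OF True])
    next
      case False then show ?thesis using Hsp_P unfolding Hsp_def by auto
    qed
  qed
  ultimately show ?thesis using c1 c2 by simp
qed

lemma adjT_Util: "adjT k U (Util k U \<theta>) \<xi> = Ustil k U \<theta> \<xi>"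
  unfolding adjT_def
proof (rule the_equality)
  obtain \<xi>1 \<xi>2 where xi: "\<xi> = (\<xi>1, \<xi>2)" by fastforce
  have mem: "Ustil k U \<theta> \<xi> \<in> Htil k U"
    unfolding xi Ustil_def Htil_def Hsp_def by (auto simp: cyl_proj_def Ustar_def intro!: imageI Hsp_ustar)
  have ipeq: "ipT k (Util k U \<theta> \<phi>) \<xi> = ipT k \<phi> (Ustil k U \<theta> \<xi>)" for \<phi>
  proof -
    obtain \<phi>0 \<phi>1 where ph: "\<phi> = (\<phi>0, \<phi>1)" by fastforce
    show ?thesis unfolding ph xi
      by (simp add: ipT_def Util_def Ustil_def ip_add_left ip_add_right ip_scale_left ip_scale_right
          ip_S ip_ubar[OF k0] ip_cyl ip_P)
  qed
  show "Ustil k U \<theta> \<xi> \<in> Htil k U \<and> (\<forall>\<phi>\<in>Htil k U. ipT k (Util k U \<theta> \<phi>) \<xi> = ipT k \<phi> (Ustil k U \<theta> \<xi>))"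
    using mem ipeq by blast
  fix \<chi> assume h: "\<chi> \<in> Htil k U \<and> (\<forall>\<phi>\<in>Htil k U. ipT k (Util k U \<theta> \<phi>) \<xi> = ipT k \<phi> \<chi>)"
  show "\<chi> = Ustil k U \<theta> \<xi>"
    using htil_unique[of \<chi> "Ustil k U \<theta> \<xi>"] h mem ipeq by auto
qed


lemma stepB:
  assumes "\<psi> \<in> Htil k U" "n + length x \<le> Suc j"
  shows "Ustil k U \<theta> (Ptil k U n x (Util k U \<theta> \<psi>)) = Ptil k U (Suc n) x \<psi>"
proof -
  obtain \<phi>0 \<phi>1 where ps: "\<psi> = (\<phi>0, \<phi>1)" and h0: "\<phi>0 \<in> Hsp k" using assms(1) unfolding Htil_def by auto
  let ?e = "exp (\<i> * complex_of_real \<theta>)"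
  let ?Q = "preimg_proj n x" and ?Q' = "preimg_proj (Suc n) x"
  let ?V1 = "\<lambda>z. swap_last2 k (Ubar k U (Pprime k U True \<phi>1)) z + Ubar k U (cyl_proj [False] \<phi>0) z"
  let ?V2 = "\<lambda>z. ?e * Ubar k U (cyl_proj [True] \<phi>0) z"
  have n1: "n + length x \<le> Suc (Suc j)" using assms(2) by simp
  have hQ0: "?Q' \<phi>0 \<in> Hsp k" by (rule Hsp_Q[OF h0])
  have hQV1: "?Q ?V1 = (\<lambda>z. swap_last2 k (Ubar k U (Pprime k U True (?Q' \<phi>1))) z + Ubar k U (cyl_proj [False] (?Q' \<phi>0)) z)"
    by (simp add: Q_add C1[OF assms(2)] C2[OF n1] C3[OF assms(2)] C4)
  have hQV2: "?Q ?V2 = (\<lambda>z. ?e * Ubar k U (cyl_proj [True] (?Q' \<phi>0)) z)"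
    by (simp add: Q_scale C2[OF n1] C4)
  have c1: "cyl_proj [False] (Ustar k U (?Q ?V1)) = cyl_proj [False] (?Q' \<phi>0)"
    unfolding hQV1 ustar_add cyl_add Z1' U1[OF Hsp_cyl[OF hQ0]]
    by (simp add: cyl_proj_def fun_eq_iff)
  have c2: "cyl_proj [True] (Ustar k U (Pprime k U True (?Q ?V2))) = (\<lambda>z. ?e * cyl_proj [True] (?Q' \<phi>0) z)"
    unfolding hQV2 P_scale P_B[OF Hsp_cyl[OF hQ0]] ustar_scale U1[OF Hsp_cyl[OF Hsp_cyl[OF hQ0]]] cyl_scale
    by (simp add: cyl_proj_def fun_eq_iff)
  have c3: "Pprime k U True (Ustar k U (swap_last2 k (?Q ?V1))) = Pprime k U True (?Q' \<phi>1)"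
    unfolding hQV1 swap_add swap_swap[OF Hsp_ubar] ustar_add U1[OF Hsp_P] P_add P_idem Z2'
    by simp
  have fst_eq: "(\<lambda>z. cyl_proj [False] (Ustar k U (?Q ?V1)) z + cnj ?e * cyl_proj [True] (Ustar k U (Pprime k U True (?Q ?V2))) z) = ?Q' \<phi>0"
    unfolding c1 c2
  proof
    fix z
    show "cyl_proj [False] (?Q' \<phi>0) z + cnj ?e * (?e * cyl_proj [True] (?Q' \<phi>0) z) = ?Q' \<phi>0 z"
      using exp_unit[of \<theta>] unfolding mult.assoc[symmetric]
      by (cases z) (auto simp: cyl_proj_def Q_eval)
  qed
  show ?thesis unfolding ps
    using fst_eq c3 by (simp add: Util_def Ptil_def Ustil_def)
qed

end

theorem corollary2:
  fixes k :: nat and U :: "bool \<Rightarrow> bool \<Rightarrow> complex" and \<theta> :: real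
    and x :: "bool list" and n :: nat
  assumes "k \<ge> 3"
    and "\<forall>i j. cmod (U i j) = 1 / sqrt 2"
    and "\<forall>i l. (\<Sum>j\<in>UNIV. cnj (U j i) * U j l) = (if i = l then 1 else 0)"
    and "n + length x < k - 1"
  shows "\<forall>\<psi>\<in>Htil k U. adjT k U (Util k U \<theta>) (Ptil k U n x (Util k U \<theta> \<psi>)) = Ptil k U (Suc n) x \<psi>"
proof
  fix \<psi> assume h: "\<psi> \<in> Htil k U"
  obtain j where kj: "k = Suc (Suc (Suc j))" using assms(1)
    by (metis add.commute add_Suc le_Suc_ex numeral_3_eq_3 plus_nat.add_0)
  have nx: "n + length x \<le> Suc j" using assms(4) kj by simp
  show "adjT k U (Util k U \<theta>) (Ptil k U n x (Util k U \<theta> \<psi>)) = Ptil k U (Suc n) x \<psi>"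
    using adjT_Util[OF kj assms(3)] stepB[OF kj assms(3) h nx] by simp
qed

end
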